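(* Let $S$ be a finite $0$-rectangular band with $m$ rows and $n=am$ columns in its non-zero $\mathscr{D}$-class, where $a\ge 1$ is an integer. If $S$ has a permutation matching, then $S$ has an involution matching.
   Context: A finite $0$-rectangular band with $m$ rows and $n$ columns: $S=(R\times C)\cup\{0\}$ with $R=\{1,\dots,m\}$, $C=\{1,\dots,n\}$, and a set $E\subseteq R\times C$ meeting every row and every column; multiplication is $(i,j)(k,l)=(i,l)$ if $(k,j)\in E$ and $0$ otherwise, with $0$ a zero element. Its non-zero $\mathscr{D}$-class is $R\times C$. For $x\in S$, $V(x)=\{y\in S: xyx=x,\ yxy=y\}$. A permutation matching of $S$ is a bijection $\phi:S\to S$ with $\phi(x)\in V(x)$ for all $x\in S$; an involution matching is a permutation matching $\phi$ with $\phi\circ\phi=\mathrm{id}_S$. *)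

theory Defs
  imports Main
begin

text \<open>Finite 0-rectangular band S = (R x C) u {0} with R = {1..m}, C = {1..n}.
  The zero is represented by None, the pair (i,j) by Some (i,j).\<close>

definition zrb_carrier :: "nat \<Rightarrow> nat \<Rightarrow> (nat \<times> nat) option set" where
  "zrb_carrier m n = insert None (Some ` ({1..m} \<times> {1..n}))"

definition zrb_mult :: "(nat \<times> nat) set \<Rightarrow> (nat \<times> nat) option \<Rightarrow> (nat \<times> nat) option \<Rightarrow> (nat \<times> nat) option" where
  "zrb_mult E x y = (case x of None \<Rightarrow> None | Some (i, j) \<Rightarrow>
      (case y of None \<Rightarrow> None | Some (k, l) \<Rightarrow> (if (k, j) \<in> E then Some (i, l) else None)))"

definition zrb_sandwich_ok :: "nat \<Rightarrow> nat \<Rightarrow> (nat \<times> nat) set \<Rightarrow> bool" where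
  "zrb_sandwich_ok m n E \<longleftrightarrow> E \<subseteq> {1..m} \<times> {1..n}
     \<and> (\<forall>i\<in>{1..m}. \<exists>j. (i, j) \<in> E) \<and> (\<forall>j\<in>{1..n}. \<exists>i. (i, j) \<in> E)"

definition zrb_V :: "nat \<Rightarrow> nat \<Rightarrow> (nat \<times> nat) set \<Rightarrow> (nat \<times> nat) option \<Rightarrow> (nat \<times> nat) option set" where
  "zrb_V m n E x = {y \<in> zrb_carrier m n.
      zrb_mult E (zrb_mult E x y) x = x \<and> zrb_mult E (zrb_mult E y x) y = y}"

definition permutation_matching ::
  "nat \<Rightarrow> nat \<Rightarrow> (nat \<times> nat) set \<Rightarrow> ((nat \<times> nat) option \<Rightarrow> (nat \<times> nat) option) \<Rightarrow> bool" where
  "permutation_matching m n E \<phi> \<longleftrightarrow>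
     bij_betw \<phi> (zrb_carrier m n) (zrb_carrier m n) \<and> (\<forall>x\<in>zrb_carrier m n. \<phi> x \<in> zrb_V m n E x)"

definition involution_matching ::
  "nat \<Rightarrow> nat \<Rightarrow> (nat \<times> nat) set \<Rightarrow> ((nat \<times> nat) option \<Rightarrow> (nat \<times> nat) option) \<Rightarrow> bool" where
  "involution_matching m n E \<phi> \<longleftrightarrow>
     permutation_matching m n E \<phi> \<and> (\<forall>x\<in>zrb_carrier m n. \<phi> (\<phi> x) = x)"

end

theory Submission imports Defs begin

lemma hall_aux:
  assumes "finite I" "\<forall>i\<in>I. finite (A i)"
    and "\<forall>J\<subseteq>I. card J \<le> card (\<Union>(A ` J))"
  shows "\<exists>f. inj_on f I \<and> (\<forall>i\<in>I. f i \<in> A i)"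
  using assms
proof (induction "\<Sum>i\<in>I. card (A i)" arbitrary: A rule: less_induct)
  case less
  show ?case
  proof (cases "\<exists>i\<in>I. \<exists>x1\<in>A i. \<exists>x2\<in>A i. x1 \<noteq> x2")
    case True
    then obtain i x1 x2 where i: "i \<in> I" and x: "x1 \<in> A i" "x2 \<in> A i" "x1 \<noteq> x2" by blast
    define U where "U = (\<lambda>K. \<Union>(A ` K))"
    have finU: "finite (U K)" if "K \<subseteq> I" for K
      unfolding U_def using that less.prems by (meson finite_UN_I finite_subset less.prems(1) subsetD)
    have key: "\<exists>x\<in>{x1,x2}. \<forall>J\<subseteq>I. card J \<le> card (\<Union>((A(i := A i - {x})) ` J))"
    proof (rule ccontr)
      assume "\<not> ?thesis"
      then obtain J1 J2 where J1: "J1 \<subseteq> I" "card J1 > card (\<Union>((A(i := A i - {x1})) ` J1))"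
        and J2: "J2 \<subseteq> I" "card J2 > card (\<Union>((A(i := A i - {x2})) ` J2))"
        by (auto simp: not_le)
      have iJ1: "i \<in> J1"
      proof (rule ccontr)
        assume "i \<notin> J1"
        hence "(A(i := A i - {x1})) ` J1 = A ` J1" by auto
        moreover have "card J1 \<le> card (\<Union>(A ` J1))" using less.prems(3) J1(1) by blast
        ultimately show False using J1(2) by simp
      qed
      have iJ2: "i \<in> J2"
      proof (rule ccontr)
        assume "i \<notin> J2"
        hence "(A(i := A i - {x2})) ` J2 = A ` J2" by auto
        moreover have "card J2 \<le> card (\<Union>(A ` J2))" using less.prems(3) J2(1) by blast
        ultimately show False using J2(2) by simp
      qed
      define K1 where "K1 = J1 - {i}"
      define K2 where "K2 = J2 - {i}"
      have K1I: "K1 \<subseteq> I" and K2I: "K2 \<subseteq> I" using J1 J2 K1_def K2_def by auto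
      have finJ1: "finite J1" "finite J2" using J1 J2 less.prems(1) finite_subset by auto
      have cJ1: "card J1 = card K1 + 1" using iJ1 finJ1 K1_def
        by (metis Suc_eq_plus1 card_Suc_Diff1)
      have cJ2: "card J2 = card K2 + 1" using iJ2 finJ1 K2_def
        by (metis Suc_eq_plus1 card_Suc_Diff1)
      define P1 where "P1 = (A i - {x1}) \<union> U K1"
      define P2 where "P2 = (A i - {x2}) \<union> U K2"
      have eP1: "\<Union>((A(i := A i - {x1})) ` J1) = P1"
        unfolding P1_def U_def K1_def using iJ1 by auto
      have eP2: "\<Union>((A(i := A i - {x2})) ` J2) = P2"
        unfolding P2_def U_def K2_def using iJ2 by auto
      have c1: "card P1 \<le> card K1" using J1 eP1 cJ1 by simp
      have c2: "card P2 \<le> card K2" using J2 eP2 cJ2 by simp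
      have finA: "finite (A i)" using less.prems i by auto
      have fP1: "finite P1" using finU[OF K1I] finA P1_def by auto
      have fP2: "finite P2" using finU[OF K2I] finA P2_def by auto
      have un: "P1 \<union> P2 = U (insert i (K1 \<union> K2))"
        unfolding P1_def P2_def U_def using x by auto
      have int: "U (K1 \<inter> K2) \<subseteq> P1 \<inter> P2"
        unfolding P1_def P2_def U_def by auto
      have h1: "card (insert i (K1 \<union> K2)) \<le> card (P1 \<union> P2)"
        using un less.prems(3) K1I K2I i unfolding U_def by (metis Un_least insert_subset)
      have h1': "card (insert i (K1 \<union> K2)) = card (K1 \<union> K2) + 1"
        using K1_def K2_def finJ1 by auto
      have h2: "card (K1 \<inter> K2) \<le> card (P1 \<inter> P2)"
      proof -
        have "card (K1 \<inter> K2) \<le> card (U (K1 \<inter> K2))"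
          using less.prems(3) K1I unfolding U_def by (meson inf.coboundedI1)
        also have "\<dots> \<le> card (P1 \<inter> P2)" using int fP1 by (simp add: card_mono)
        finally show ?thesis .
      qed
      have h3: "card (P1 \<union> P2) + card (P1 \<inter> P2) = card P1 + card P2"
        using card_Un_Int[OF fP1 fP2] by simp
      have h4: "card (K1 \<union> K2) + card (K1 \<inter> K2) = card K1 + card K2"
        proof -
        have "finite K1" "finite K2" using finJ1 K1_def K2_def by auto
        thus ?thesis using card_Un_Int[of K1 K2] by simp
      qed
      show False using h1 h1' h2 h3 h4 c1 c2 by linarith
    qed
    then obtain x where xx: "x \<in> {x1,x2}" and H: "\<forall>J\<subseteq>I. card J \<le> card (\<Union>((A(i := A i - {x})) ` J))"
      by blast
    define A' where "A' = A(i := A i - {x})"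
    have xA: "x \<in> A i" using xx x by auto
    have finA: "finite (A i)" using less.prems i by auto
    have lt: "(\<Sum>k\<in>I. card (A' k)) < (\<Sum>k\<in>I. card (A k))"
    proof (rule sum_strict_mono_ex1[OF less.prems(1)])
      show "\<forall>k\<in>I. card (A' k) \<le> card (A k)"
        unfolding A'_def using less.prems(2) by (auto intro: card_mono)
      show "\<exists>k\<in>I. card (A' k) < card (A k)"
      proof (rule bexI[OF _ i])
        show "card (A' i) < card (A i)" unfolding A'_def using card_Diff1_less[OF finA xA] by simp
      qed
    qed
    have "\<exists>f. inj_on f I \<and> (\<forall>k\<in>I. f k \<in> A' k)"
      using less.hyps[OF lt less.prems(1)] less.prems(2) H unfolding A'_def by auto
    then obtain f where "inj_on f I" "\<forall>k\<in>I. f k \<in> A' k" by blast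
    moreover have "\<forall>k\<in>I. A' k \<subseteq> A k" unfolding A'_def by auto
    ultimately show ?thesis by blast
  next
    case False
    have "\<forall>k\<in>I. \<exists>y. A k = {y}"
    proof
      fix k assume k: "k \<in> I"
      have "card {k} \<le> card (\<Union>(A ` {k}))" using less.prems(3) k by blast
      hence "A k \<noteq> {}" by auto
      then obtain y where "y \<in> A k" by blast
      thus "\<exists>y. A k = {y}" using False k by blast
    qed
    then obtain g where g: "\<forall>k\<in>I. A k = {g k}" by metis
    have "inj_on g I"
    proof (rule inj_onI)
      fix p q assume pq: "p \<in> I" "q \<in> I" "g p = g q"
      show "p = q"
      proof (rule ccontr)
        assume "p \<noteq> q"
        hence "card {p,q} = 2" by auto
        moreover have "\<Union>(A ` {p,q}) = {g p}" using g pq by auto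
        ultimately show False using less.prems(3) pq
          by (metis One_nat_def card.empty card_insert_disjoint empty_iff empty_subsetI finite.emptyI
              insert_subset numeral_le_one_iff semiring_norm(69))
      qed
    qed
    thus ?thesis using g by auto
  qed
qed

lemma V_Some:
  "Some (k,l) \<in> zrb_V m n E (Some (i,j)) \<longleftrightarrow> k\<in>{1..m} \<and> l\<in>{1..n} \<and> (k,j)\<in>E \<and> (i,l)\<in>E"
  unfolding zrb_V_def zrb_carrier_def zrb_mult_def by auto

lemma V_None: "None \<notin> zrb_V m n E (Some (i,j))"
  unfolding zrb_V_def zrb_mult_def by auto

lemma V_0: "None \<in> zrb_V m n E None"
  unfolding zrb_V_def zrb_mult_def zrb_carrier_def by auto

lemma phi_Some:
  assumes "permutation_matching m n E \<phi>" "i \<in> {1..m}" "j \<in> {1..n}"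
  obtains k l where "\<phi> (Some (i,j)) = Some (k,l)" "k\<in>{1..m}" "l\<in>{1..n}" "(k,j)\<in>E" "(i,l)\<in>E"
proof -
  have "Some (i,j) \<in> zrb_carrier m n" using assms unfolding zrb_carrier_def by auto
  hence V: "\<phi> (Some (i,j)) \<in> zrb_V m n E (Some (i,j))" using assms(1) unfolding permutation_matching_def by blast
  then obtain k l where e: "\<phi> (Some (i,j)) = Some (k,l)" using V_None
    by (metis option.exhaust surj_pair)
  show ?thesis using that e V unfolding e V_Some by blast
qed

theorem proposition2p3:
  fixes m n a :: nat and E :: "(nat \<times> nat) set"
  assumes "m \<ge> 1" and "a \<ge> 1" and "n = a * m"
    and "zrb_sandwich_ok m n E"
    and "\<exists>\<phi>. permutation_matching m n E \<phi>"
  shows "\<exists>\<psi>. involution_matching m n E \<psi>"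
proof -
  obtain \<phi> where phi: "permutation_matching m n E \<phi>" using assms(5) by blast
  define I where "I = {1..m} \<times> {1..a}"
  define A where "A = (\<lambda>p::nat\<times>nat. {j\<in>{1..n}. (fst p, j) \<in> E})"
  have hallc: "\<forall>J\<subseteq>I. card J \<le> card (\<Union>(A ` J))"
  proof (intro allI impI)
    fix J assume JI: "J \<subseteq> I"
    define X where "X = fst ` J"
    define N where "N = {j\<in>{1..n}. \<exists>i\<in>X. (i,j)\<in>E}"
    have XR: "X \<subseteq> {1..m}" using JI unfolding X_def I_def by auto
    have finX: "finite X" using XR finite_subset by blast
    have "J \<subseteq> X \<times> {1..a}" using JI unfolding X_def I_def by force
    hence "card J \<le> card (X \<times> {1..a})" using finX by (intro card_mono) auto
    hence c1: "card J \<le> card X * a" by (simp add: card_cartesian_product)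
    have UN: "\<Union>(A ` J) = N" unfolding A_def N_def X_def by auto
    have finN: "finite N" unfolding N_def by auto
    have inj: "inj_on \<phi> (Some ` (X \<times> {1..n}))"
    proof -
      have "Some ` (X \<times> {1..n}) \<subseteq> zrb_carrier m n" using XR unfolding zrb_carrier_def by auto
      thus ?thesis using phi unfolding permutation_matching_def bij_betw_def by (meson inj_on_subset)
    qed
    have img: "\<phi> ` (Some ` (X \<times> {1..n})) \<subseteq> Some ` ({1..m} \<times> N)"
    proof
      fix y assume "y \<in> \<phi> ` (Some ` (X \<times> {1..n}))"
      then obtain i j where ij: "i \<in> X" "j \<in> {1..n}" "y = \<phi> (Some (i,j))" by auto
      obtain k l where "\<phi> (Some (i,j)) = Some (k,l)" "k\<in>{1..m}" "l\<in>{1..n}" "(i,l)\<in>E"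
        using phi_Some[OF phi, of i j] ij XR by blast
      thus "y \<in> Some ` ({1..m} \<times> N)" using ij unfolding N_def by auto
    qed
    have "card (\<phi> ` (Some ` (X \<times> {1..n}))) \<le> card (Some ` ({1..m} \<times> N))"
      using img finN by (intro card_mono) auto
    hence "card (X \<times> {1..n}) \<le> card ({1..m} \<times> N)"
      using inj by (simp add: card_image)
    hence "card X * n \<le> m * card N" by (simp add: card_cartesian_product)
    hence "m * (card X * a) \<le> m * card N" using assms(3) by (simp add: algebra_simps)
    hence "card X * a \<le> card N" using assms(1) by simp
    thus "card J \<le> card (\<Union>(A ` J))" using c1 UN by simp
  qed
  have finI: "finite I" unfolding I_def by auto
  obtain f where finj: "inj_on f I" and fA: "\<forall>p\<in>I. f p \<in> A p"
    using hall_aux[OF finI _ hallc] unfolding A_def by auto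
  have cI: "card I = n" unfolding I_def using assms(3) by (simp add: card_cartesian_product)
  have fI: "f ` I = {1..n}"
  proof (rule card_subset_eq)
    show "f ` I \<subseteq> {1..n}" using fA unfolding A_def by auto
    show "card (f ` I) = card {1..n}" using card_image[OF finj] cI by simp
  qed auto
  have fbij: "bij_betw f I {1..n}" using finj fI unfolding bij_betw_def by auto
  define g where "g = the_inv_into I f"
  have gI: "g j \<in> I" and fg: "f (g j) = j" if "j \<in> {1..n}" for j
    using that fbij unfolding g_def
    by (auto simp: bij_betw_def the_inv_into_into f_the_inv_into_f)
  have gf: "g (f p) = p" if "p \<in> I" for p
    using that finj unfolding g_def by (simp add: the_inv_into_f_f)
  define \<psi> where "\<psi> = (\<lambda>x. case x of None \<Rightarrow> None
      | Some (i,j) \<Rightarrow> Some (fst (g j), f (i, snd (g j))))"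
  have main: "\<psi> x \<in> zrb_V m n E x \<and> \<psi> x \<in> zrb_carrier m n \<and> \<psi> (\<psi> x) = x"
    if x: "x \<in> zrb_carrier m n" for x
  proof (cases x)
    case None
    then show ?thesis using V_0 unfolding \<psi>_def zrb_carrier_def by auto
  next
    case (Some p)
    then obtain i j where xe: "x = Some (i,j)" and i: "i\<in>{1..m}" and j: "j\<in>{1..n}"
      using x unfolding zrb_carrier_def by auto
    obtain k s where ks: "g j = (k,s)" by fastforce
    have ksI: "(k,s) \<in> I" using gI[OF j] ks by simp
    have fks: "f (k,s) = j" using fg[OF j] ks by simp
    define l where "l = f (i,s)"
    have isI: "(i,s) \<in> I" using ksI i unfolding I_def by auto
    have l: "l \<in> {1..n}" "(i,l) \<in> E" using fA isI unfolding l_def A_def by auto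
    have kj: "(k,j) \<in> E" using fA ksI fks unfolding A_def by force
    have k: "k \<in> {1..m}" using ksI unfolding I_def by auto
    have gl: "g l = (i,s)" using gf[OF isI] l_def by simp
    have px: "\<psi> x = Some (k,l)" unfolding \<psi>_def xe using ks l_def by simp
    have ppx: "\<psi> (Some (k,l)) = Some (i,j)" unfolding \<psi>_def using gl fks by simp
    show ?thesis using px ppx xe k l kj V_Some[of k l m n E i j]
      unfolding zrb_carrier_def by auto
  qed
  have "bij_betw \<psi> (zrb_carrier m n) (zrb_carrier m n)"
    by (rule bij_betw_byWitness[where f'=\<psi>]) (use main in auto)
  hence "involution_matching m n E \<psi>"
    unfolding involution_matching_def permutation_matching_def using main by blast
  thus ?thesis by blast
qed

end
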